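(* Let $1\le p,q<\infty$, $\theta>0$ and $\varepsilon_0\in(0,\infty)$. For $g\in l^{q),\theta}(L^p)$ define $$\|g\|_{p,q),\theta,\varepsilon_0}:=\sup_{0<\varepsilon\le\varepsilon_0}\varepsilon^{\frac{\theta}{q(1+\varepsilon)}}\|g\|_{l^{q(1+\varepsilon)}(L^p)}.$$ Then $\|\cdot\|_{p,q),\theta}$ and $\|\cdot\|_{p,q),\theta,\varepsilon_0}$ are equivalent norms; more precisely, for every such $g$, $$\|g\|_{p,q),\theta,\varepsilon_0}\le\|g\|_{p,q),\theta}\le (c(\varepsilon_0))^{\frac{\theta}{q}}\|g\|_{p,q),\theta,\varepsilon_0},\qquad c(\varepsilon_0)=\frac{1}{\mathrm e\,W(1/\mathrm e)}\,\varepsilon_0^{-\frac{1}{1+\varepsilon_0}},$$ where $W$ is the Lambert function.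
   Context: Let $X$ be one of $\mathbb N,\mathbb N_0,\mathbb Z$ and $I_k=[k,k+1)$ for $k\in X$. For $1\le r<\infty$ and $1\le p<\infty$, $\|g\|_{l^{r}(L^p)}:=\Big(\sum_{k\in X}\Big(\int_{I_k}|g|^p\,dx\Big)^{r/p}\Big)^{1/r}$. The space $l^{q),\theta}(L^p)$ consists of complex-valued measurable $g$ on $\bigcup_{k\in X}I_k$ with $g\chi_{I_k}\in L^p$ for all $k$ and $\|g\|_{p,q),\theta}:=\sup_{\varepsilon>0}\varepsilon^{\frac{\theta}{q(1+\varepsilon)}}\|g\|_{l^{q(1+\varepsilon)}(L^p)}<\infty$. The Lambert function $W$ is the inverse of $y\mapsto y\mathrm e^y$ on $(0,\infty)$. *)

theory Defs
  imports "HOL-Analysis.Analysis"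
begin

definition Ik :: "int \<Rightarrow> real set" where
  "Ik k = {real_of_int k..<real_of_int k + 1}"

definition lrLp_norm :: "int set \<Rightarrow> real \<Rightarrow> real \<Rightarrow> (real \<Rightarrow> complex) \<Rightarrow> real" where
  "lrLp_norm X p r g =
     (\<Sum>\<^sub>\<infinity>k\<in>X. (LINT x:Ik k|lebesgue. norm (g x) powr p) powr (r / p)) powr (1 / r)"

definition lrLp_finite :: "int set \<Rightarrow> real \<Rightarrow> real \<Rightarrow> (real \<Rightarrow> complex) \<Rightarrow> bool" where
  "lrLp_finite X p r g \<longleftrightarrow>
     (\<lambda>k. (LINT x:Ik k|lebesgue. norm (g x) powr p) powr (r / p)) summable_on X"

definition in_grand_space :: "int set \<Rightarrow> real \<Rightarrow> real \<Rightarrow> real \<Rightarrow> (real \<Rightarrow> complex) \<Rightarrow> bool" where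
  "in_grand_space X p q \<theta> g \<longleftrightarrow>
     set_borel_measurable lebesgue (\<Union>k\<in>X. Ik k) g \<and>
     (\<forall>k\<in>X. set_integrable lebesgue (Ik k) (\<lambda>x. norm (g x) powr p)) \<and>
     (\<forall>\<epsilon>>0. lrLp_finite X p (q * (1 + \<epsilon>)) g) \<and>
     bdd_above ((\<lambda>\<epsilon>. \<epsilon> powr (\<theta> / (q * (1 + \<epsilon>))) * lrLp_norm X p (q * (1 + \<epsilon>)) g) ` {0<..})"

definition grand_norm :: "int set \<Rightarrow> real \<Rightarrow> real \<Rightarrow> real \<Rightarrow> (real \<Rightarrow> complex) \<Rightarrow> real" where
  "grand_norm X p q \<theta> g =
     (SUP \<epsilon>\<in>{0<..}. \<epsilon> powr (\<theta> / (q * (1 + \<epsilon>))) * lrLp_norm X p (q * (1 + \<epsilon>)) g)"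

definition grand_norm_eps :: "int set \<Rightarrow> real \<Rightarrow> real \<Rightarrow> real \<Rightarrow> real \<Rightarrow> (real \<Rightarrow> complex) \<Rightarrow> real" where
  "grand_norm_eps X p q \<theta> \<epsilon>0 g =
     (SUP \<epsilon>\<in>{0<..\<epsilon>0}. \<epsilon> powr (\<theta> / (q * (1 + \<epsilon>))) * lrLp_norm X p (q * (1 + \<epsilon>)) g)"

definition LambertW :: "real \<Rightarrow> real" where
  "LambertW x = (THE y. 0 < y \<and> y * exp y = x)"

definition c_eps :: "real \<Rightarrow> real" where
  "c_eps \<epsilon>0 = 1 / (exp 1 * LambertW (1 / exp 1)) * \<epsilon>0 powr (- 1 / (1 + \<epsilon>0))"

end

theory Submission
  imports Defs
begin

lemma lambert_prop:
  shows "0 < LambertW (1 / exp 1) \<and> LambertW (1 / exp 1) * exp (LambertW (1 / exp 1)) = 1 / exp 1"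
proof -
  have c: "continuous_on {0..1} (\<lambda>y::real. y * exp y)"
    by (intro continuous_intros)
  have l1: "1 / exp 1 \<le> 1 * exp (1::real)"
  proof -
    have e1: "1 \<le> exp (1::real)" by simp
    have "1 / exp 1 \<le> (1::real)" using e1 by simp
    hence "1 / exp 1 \<le> exp (1::real)" using e1 by linarith
    thus ?thesis by simp
  qed
  have z0: "0 * exp 0 \<le> 1 / exp (1::real)" by simp
  have ex: "\<exists>y::real. 0 \<le> y \<and> y \<le> 1 \<and> y * exp y = 1 / exp 1"
    using IVT'[of "\<lambda>y::real. y * exp y" "0::real" "1 / exp 1" 1, OF z0 l1 zero_le_one c] by simp
  then obtain y :: real where y: "0 \<le> y" "y * exp y = 1 / exp 1" by blast
  have ypos: "0 < y"
  proof (rule ccontr)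
    assume "\<not> 0 < y"
    hence "y = 0" using y(1) by linarith
    hence "y * exp y = 0" by simp
    moreover have "(0::real) < 1 / exp 1" by simp
    ultimately show False using y(2) by linarith
  qed
  have uniq: "z = y" if "0 < z" "z * exp z = 1 / exp 1" for z
  proof (rule ccontr)
    assume "z \<noteq> y"
    hence "z < y \<or> y < z" by linarith
    thus False
    proof
      assume zy: "z < y"
      have "z * exp z < y * exp y"
        by (rule mult_strict_mono[OF zy exp_less_mono[OF zy] ypos less_imp_le[OF exp_gt_zero]])
      thus False using that(2) y(2) by linarith
    next
      assume yz: "y < z"
      have "y * exp y < z * exp z"
        by (rule mult_strict_mono[OF yz exp_less_mono[OF yz] that(1) less_imp_le[OF exp_gt_zero]])
      thus False using that(2) y(2) by linarith
    qed
  qed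
  have "LambertW (1 / exp 1) = y"
    unfolding LambertW_def
  proof (rule the_equality)
    show "0 < y \<and> y * exp y = 1 / exp 1" using ypos y(2) by (rule conjI)
  next
    fix x :: real assume "0 < x \<and> x * exp x = 1 / exp 1"
    thus "x = y" using uniq by blast
  qed
  thus ?thesis using ypos y by simp
qed

lemma key_bound:
  fixes e :: real
  assumes "0 < e"
  shows "e powr (1 / (1 + e)) \<le> exp (LambertW (1 / exp 1))"
proof -
  define w where "w = LambertW (1 / exp 1)"
  have w: "0 < w" "w * exp w = 1 / exp 1" using lambert_prop unfolding w_def by auto
  have "ln (w * exp w) = ln (1 / exp 1)" using w by simp
  moreover have "ln (w * exp w) = ln w + w" using w(1) by (simp add: ln_mult)
  moreover have "ln (1 / exp 1) = (-1::real)" by (simp add: ln_div)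
  ultimately have lw: "ln w + w = -1" by simp
  have "ln (e * w) \<le> e * w - 1" using assms w by (intro ln_le_minus_one) simp
  hence "ln e + ln w \<le> e * w - 1" using assms w by (simp add: ln_mult)
  hence "ln e \<le> w * (1 + e)" using lw by (simp add: algebra_simps)
  hence "ln e / (1 + e) \<le> w" using assms by (simp add: divide_simps mult.commute)
  hence "exp (ln e / (1 + e)) \<le> exp w" by simp
  thus ?thesis using assms unfolding w_def by (simp add: powr_def)
qed

lemma infsum_single_le:
  fixes b :: "'a \<Rightarrow> real"
  assumes "b summable_on X" "\<And>k. k \<in> X \<Longrightarrow> 0 \<le> b k" "k \<in> X"
  shows "b k \<le> infsum b X"
proof -
  have "infsum b {k} \<le> infsum b X"
    by (rule infsum_mono2) (use assms in auto)
  thus ?thesis by simp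
qed

lemma norm_mono:
  fixes A :: "int \<Rightarrow> real"
  assumes A: "\<And>k. k \<in> X \<Longrightarrow> 0 \<le> A k" and s: "0 < s" "s \<le> r" and p: "0 < p"
    and sums: "(\<lambda>k. A k powr (s/p)) summable_on X" "(\<lambda>k. A k powr (r/p)) summable_on X"
  shows "(\<Sum>\<^sub>\<infinity>k\<in>X. A k powr (r/p)) powr (1/r) \<le> (\<Sum>\<^sub>\<infinity>k\<in>X. A k powr (s/p)) powr (1/s)"
proof -
  define b where "b = (\<lambda>k. A k powr (s/p))"
  define B where "B = infsum b X"
  define t where "t = r / s"
  have t1: "1 \<le> t" using s unfolding t_def by simp
  have bnn: "\<And>k. 0 \<le> b k" unfolding b_def by simp
  have bs: "b summable_on X" using sums unfolding b_def by simp
  have bB: "b k \<le> B" if "k \<in> X" for k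
    unfolding B_def by (rule infsum_single_le) (use bs bnn that in auto)
  have Bnn: "0 \<le> B" unfolding B_def by (rule infsum_nonneg) (use bnn in auto)
  have rew: "A k powr (r/p) = b k powr t" if "k \<in> X" for k
    using A[OF that] s p unfolding b_def t_def by (simp add: powr_powr)
  have pt: "b k powr t \<le> B powr (t - 1) * b k" if "k \<in> X" for k
  proof (cases "b k = 0")
    case True thus ?thesis using t1 by simp
  next
    case False
    hence bp: "0 < b k" using bnn[of k] by simp
    have "b k powr t = b k powr (t - 1) * b k"
      using bp by (simp add: powr_diff)
    also have "\<dots> \<le> B powr (t - 1) * b k"
      using bp bB[OF that] t1 by (intro mult_right_mono powr_mono2) auto
    finally show ?thesis .
  qed
  have S1: "(\<Sum>\<^sub>\<infinity>k\<in>X. A k powr (r/p)) = (\<Sum>\<^sub>\<infinity>k\<in>X. b k powr t)"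
    using rew by (rule infsum_cong)
  have sum2: "(\<lambda>k. b k powr t) summable_on X"
    using sums(2) summable_on_cong[of X "\<lambda>k. A k powr (r/p)" "\<lambda>k. b k powr t"] rew by simp
  have cs: "(\<lambda>k. B powr (t - 1) * b k) summable_on X"
    by (rule summable_on_cmult_right[OF bs])
  have "(\<Sum>\<^sub>\<infinity>k\<in>X. b k powr t) \<le> (\<Sum>\<^sub>\<infinity>k\<in>X. B powr (t - 1) * b k)"
    by (rule infsum_mono[OF sum2 cs pt])
  also have "\<dots> = B powr (t - 1) * B"
    unfolding B_def by (rule infsum_cmult_right) (use bs in auto)
  finally have le: "(\<Sum>\<^sub>\<infinity>k\<in>X. b k powr t) \<le> B powr (t - 1) * B" .
  have nn: "0 \<le> (\<Sum>\<^sub>\<infinity>k\<in>X. b k powr t)" by (rule infsum_nonneg) simp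
  have RHS: "(\<Sum>\<^sub>\<infinity>k\<in>X. A k powr (s/p)) = B" unfolding B_def b_def by (rule refl)
  have goal: "(\<Sum>\<^sub>\<infinity>k\<in>X. b k powr t) powr (1/r) \<le> B powr (1/s)"
  proof (cases "B = 0")
    case True
    have "B powr (t - 1) * B = 0" using True by simp
    hence "(\<Sum>\<^sub>\<infinity>k\<in>X. b k powr t) = 0" using le nn by linarith
    thus ?thesis by simp
  next
    case False
    hence Bp: "0 < B" using Bnn by simp
    have e1: "B powr (t - 1) * B = B powr t"
      using Bp by (simp add: powr_diff)
    have e2: "(B powr t) powr (1/r) = B powr (t * (1/r))"
      by (rule powr_powr)
    have e3: "t * (1/r) = 1/s"
      using s unfolding t_def by simp
    have "(\<Sum>\<^sub>\<infinity>k\<in>X. b k powr t) powr (1/r) \<le> (B powr (t - 1) * B) powr (1/r)"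
      using le nn s by (intro powr_mono2) auto
    also have "\<dots> = B powr (1/s)"
      unfolding e1 e2 e3 by (rule refl)
    finally show ?thesis .
  qed
  show ?thesis unfolding S1 RHS by (rule goal)
qed

lemma c_eps_eq:
  assumes "0 < e0"
  shows "c_eps e0 = exp (LambertW (1 / exp 1)) * e0 powr (- 1 / (1 + e0))"
proof -
  define w where "w = LambertW (1 / exp 1)"
  have w: "0 < w" "w * exp w = 1 / exp 1" using lambert_prop unfolding w_def by auto
  have h: "exp 1 * (w * exp w) = 1"
    unfolding w(2) by simp
  have nz: "exp 1 * w \<noteq> 0" using w(1) by simp
  have eq: "1 / (exp 1 * w) = exp w"
    using nz h by (simp add: divide_eq_eq algebra_simps)
  show ?thesis by (simp only: c_eps_def w_def[symmetric] eq)
qed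

theorem lemma2p7:
  fixes X :: "int set" and p q \<theta> \<epsilon>0 :: real and g :: "real \<Rightarrow> complex"
  assumes "X = {1..} \<or> X = {0..} \<or> X = UNIV"
    and "1 \<le> p" and "1 \<le> q" and "0 < \<theta>" and "0 < \<epsilon>0"
    and "in_grand_space X p q \<theta> g"
  shows "grand_norm_eps X p q \<theta> \<epsilon>0 g \<le> grand_norm X p q \<theta> g \<and>
         grand_norm X p q \<theta> g \<le> c_eps \<epsilon>0 powr (\<theta> / q) * grand_norm_eps X p q \<theta> \<epsilon>0 g"
proof -
  define F where "F e = e powr (\<theta> / (q * (1 + e))) * lrLp_norm X p (q * (1 + e)) g" for e
  define A where "A k = (LINT x:Ik k|lebesgue. norm (g x) powr p)" for k
  define E where "E = exp (LambertW (1 / exp 1))"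
  define G where "G = grand_norm_eps X p q \<theta> \<epsilon>0 g"
  define C where "C = c_eps \<epsilon>0 powr (\<theta> / q)"
  have p0: "0 < p" and q0: "0 < q" using assms by auto
  have summ: "\<And>e. 0 < e \<Longrightarrow> (\<lambda>k. A k powr (q * (1 + e) / p)) summable_on X"
    using assms(6) unfolding in_grand_space_def lrLp_finite_def A_def by auto
  have bdd: "bdd_above (F ` {0<..})"
    using assms(6) unfolding in_grand_space_def F_def by auto
  have bdd0: "bdd_above (F ` {0<..\<epsilon>0})"
    by (rule bdd_above_mono[OF bdd]) auto
  have GN: "grand_norm X p q \<theta> g = (SUP e\<in>{0<..}. F e)"
    unfolding grand_norm_def F_def by simp
  have GE: "G = (SUP e\<in>{0<..\<epsilon>0}. F e)"
    unfolding G_def grand_norm_eps_def F_def by simp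
  have Fnn: "0 \<le> F e" for e
    unfolding F_def lrLp_norm_def by simp
  have FG: "F e \<le> G" if "0 < e" "e \<le> \<epsilon>0" for e
    unfolding GE by (rule cSUP_upper[OF _ bdd0]) (use that in auto)
  have G0: "0 \<le> G" using FG[of \<epsilon>0] Fnn[of \<epsilon>0] assms(5) by simp
  have Ep: "0 < E" unfolding E_def by simp
  have kb: "e powr (1 / (1 + e)) \<le> E" if "0 < e" for e
    using key_bound[OF that] unfolding E_def .
  have ceq: "c_eps \<epsilon>0 = E * \<epsilon>0 powr (- 1 / (1 + \<epsilon>0))"
    using c_eps_eq[OF assms(5)] unfolding E_def .
  have c1: "1 \<le> c_eps \<epsilon>0"
  proof -
    have a: "0 < \<epsilon>0 powr (1 / (1 + \<epsilon>0))" using assms(5) by simp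
    have "\<epsilon>0 powr (- 1 / (1 + \<epsilon>0)) = \<epsilon>0 powr (- (1 / (1 + \<epsilon>0)))"
      by (simp only: minus_divide_left)
    also have "\<dots> = 1 / \<epsilon>0 powr (1 / (1 + \<epsilon>0))"
      by (rule powr_minus_divide)
    finally have cc: "c_eps \<epsilon>0 = E / \<epsilon>0 powr (1 / (1 + \<epsilon>0))"
      using ceq by simp
    show ?thesis unfolding cc using kb[OF assms(5)] a by (simp add: le_divide_eq)
  qed
  have C1: "1 \<le> C" unfolding C_def using c1 assms(3,4)
    by (simp add: ge_one_powr_ge_zero)
  have CF0: "C * \<epsilon>0 powr (\<theta> / (q * (1 + \<epsilon>0))) = E powr (\<theta> / q)"
  proof -
    have "C = E powr (\<theta> / q) * (\<epsilon>0 powr (- 1 / (1 + \<epsilon>0))) powr (\<theta> / q)"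
      unfolding C_def ceq using Ep assms(5) by (simp add: powr_mult)
    also have "(\<epsilon>0 powr (- 1 / (1 + \<epsilon>0))) powr (\<theta> / q) = \<epsilon>0 powr (- (\<theta> / (q * (1 + \<epsilon>0))))"
      by (simp add: powr_powr mult.commute)
    finally have "C = E powr (\<theta> / q) * \<epsilon>0 powr (- (\<theta> / (q * (1 + \<epsilon>0))))" .
    thus ?thesis using assms(5) by (simp add: powr_minus field_simps)
  qed
  have main: "F e \<le> C * G" if e: "0 < e" for e
  proof (cases "e \<le> \<epsilon>0")
    case True
    have "F e \<le> G" using FG e True by simp
    also have "G \<le> C * G" using mult_right_mono[OF C1 G0] by simp
    finally show ?thesis .
  next
    case False
    have Ann: "0 \<le> A k" for k unfolding A_def set_lebesgue_integral_def by (rule Bochner_Integration.integral_nonneg) (simp add: indicator_def)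
    have Nle: "lrLp_norm X p (q * (1 + e)) g \<le> lrLp_norm X p (q * (1 + \<epsilon>0)) g"
      unfolding lrLp_norm_def A_def[symmetric]
      by (rule norm_mono[OF Ann _ _ p0 summ summ]) (use False q0 assms(5) e in auto)
    have Nnn: "0 \<le> lrLp_norm X p (q * (1 + \<epsilon>0)) g" unfolding lrLp_norm_def by simp
    have Nnn2: "0 \<le> lrLp_norm X p (q * (1 + e)) g" unfolding lrLp_norm_def by simp
    have "e powr (\<theta> / (q * (1 + e))) = (e powr (1 / (1 + e))) powr (\<theta> / q)"
      by (simp add: powr_powr mult.commute)
    also have "\<dots> \<le> E powr (\<theta> / q)"
      using kb[OF e] assms(3,4) by (intro powr_mono2) auto
    finally have ee: "e powr (\<theta> / (q * (1 + e))) \<le> E powr (\<theta> / q)" .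
    have "F e \<le> E powr (\<theta> / q) * lrLp_norm X p (q * (1 + \<epsilon>0)) g"
      unfolding F_def using ee Nle Nnn Nnn2 by (intro mult_mono) auto
    also have "\<dots> = C * F \<epsilon>0" unfolding F_def CF0[symmetric] by simp
    also have "\<dots> \<le> C * G" using FG[of \<epsilon>0] assms(5) C1 by (intro mult_left_mono) auto
    finally show ?thesis .
  qed
  have part1: "G \<le> grand_norm X p q \<theta> g"
    unfolding GE GN by (rule cSUP_subset_mono[OF _ bdd]) (use assms(5) in auto)
  have part2: "grand_norm X p q \<theta> g \<le> C * G"
    unfolding GN by (rule cSUP_least) (use main in auto)
  show ?thesis using part1 part2 unfolding G_def C_def by simp
qed

end
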